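(* Let $(L,\mathcal P)$, $\mathcal P=(P_n)_{n\in\mathbb{N}}$, be an $x$–$y$ grain line in a graph $G$, let $\ell_1,\ell_2\in L$ with $\ell_1<_L\ell_2$, and let $N\in\mathbb{N}$ be such that $P_N$ grains $\{\ell_1,\ell_2\}$. Then $([\ell_1,\ell_2]_L,(\ell_1P_n\ell_2)_{n\ge N})$, with $[\ell_1,\ell_2]_L$ carrying the restriction of $\le_L$, is an $\ell_1$–$\ell_2$ grain line in $G$; moreover, it is wildly presented if $(L,\mathcal P)$ is wildly presented.
   Context: Graphs are simple and may be infinite; $\mathbb{N}=\{0,1,2,\dots\}$. An $a$–$b$ path $P$ induces the linear order $\le_P$ of traversal from $a$ to $b$ on $V(P)$; for vertices $s,t$ on $P$, $sPt$ denotes the subpath of $P$ between them. For distinct vertices $a,b$ and $M\in\mathbb{N}$, an $a$–$b$ grain line in $G$ (indexed from $M$) is a pair $(L,\mathcal P)$ where $L\subseteq V(G)$ is a countable set with a linear order $\le_L$ having least element $a$ and greatest element $b$, and $\mathcal P=(P_n)_{n\ge M}$ is a sequence of pairwise edge-disjoint $a$–$b$ paths in $G$, such that: (GL1) $L$ is exactly the set of vertices $v$ for which $\{n\ge M: v\in V(P_n)\}$ is a non-empty final segment $\{n:n\ge m\}$ of $\{n\in\mathbb{N}:n\ge M\}$; (GL2) if a vertex of $P_n$ is not in $L$, it lies on no $P_m$ with $m\ne n$; (GL3) for every $n\ge M$, $\le_{P_n}$ and $\le_L$ induce the same linear order on $L_{<n}:=L\cap\bigcup_{M\le k<n}V(P_k)$.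 Interval notation: $[\ell,\ell']_L=\{\ell''\in L:\ell\le_L\ell''\le_L\ell'\}$, $(\ell,\ell')_L$ the corresponding open interval. A path $P_n$ grains a vertex set $U$ if for every $m\ge n$ we have $V(P_m)\cap U=L\cap U$ and $\le_{P_m}$ and $\le_L$ induce the same linear order on this set. A grain line is wildly presented if for every $n$ and all $\ell<_L\ell'$ in $L_{<n}$, the subpath $\ell P_n\ell'$ has a vertex in $(\ell,\ell')_L$. *)

theory Defs
  imports Main "HOL-Library.Countable_Set"
begin

definition simple_graph :: "'a set \<Rightarrow> ('a \<Rightarrow> 'a \<Rightarrow> bool) \<Rightarrow> bool" where
  "simple_graph V E \<longleftrightarrow> (\<forall>u v. E u v \<longrightarrow> E v u \<and> u \<noteq> v \<and> u \<in> V \<and> v \<in> V)"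

definition is_path :: "'a set \<Rightarrow> ('a \<Rightarrow> 'a \<Rightarrow> bool) \<Rightarrow> 'a list \<Rightarrow> bool" where
  "is_path V E P \<longleftrightarrow> P \<noteq> [] \<and> distinct P \<and> set P \<subseteq> V \<and>
     (\<forall>i. Suc i < length P \<longrightarrow> E (P ! i) (P ! Suc i))"

definition ab_path :: "'a set \<Rightarrow> ('a \<Rightarrow> 'a \<Rightarrow> bool) \<Rightarrow> 'a \<Rightarrow> 'a \<Rightarrow> 'a list \<Rightarrow> bool" where
  "ab_path V E a b P \<longleftrightarrow> is_path V E P \<and> hd P = a \<and> last P = b"

definition path_edges :: "'a list \<Rightarrow> 'a set set" where
  "path_edges P = {{P ! i, P ! Suc i} | i. Suc i < length P}"

text \<open>Position of a vertex on a path (meaningful for vertices on the path).\<close>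
definition index :: "'a list \<Rightarrow> 'a \<Rightarrow> nat" where
  "index P u = (LEAST i. i < length P \<and> P ! i = u)"

definition path_le :: "'a list \<Rightarrow> 'a \<Rightarrow> 'a \<Rightarrow> bool" where
  "path_le P u v \<longleftrightarrow> u \<in> set P \<and> v \<in> set P \<and> index P u \<le> index P v"

definition subpath :: "'a list \<Rightarrow> 'a \<Rightarrow> 'a \<Rightarrow> 'a list" where
  "subpath P s t =
     (if index P s \<le> index P t then drop (index P s) (take (Suc (index P t)) P)
      else rev (drop (index P t) (take (Suc (index P s)) P)))"

definition same_order_on :: "'a set \<Rightarrow> 'a rel \<Rightarrow> 'a list \<Rightarrow> bool" where
  "same_order_on S r P \<longleftrightarrow> (\<forall>u\<in>S. \<forall>v\<in>S. (u, v) \<in> r \<longleftrightarrow> path_le P u v)"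

definition L_below :: "'a set \<Rightarrow> nat \<Rightarrow> (nat \<Rightarrow> 'a list) \<Rightarrow> nat \<Rightarrow> 'a set" where
  "L_below L M P n = L \<inter> (\<Union>k\<in>{M..<n}. set (P k))"

definition closed_interval :: "'a set \<Rightarrow> 'a rel \<Rightarrow> 'a \<Rightarrow> 'a \<Rightarrow> 'a set" where
  "closed_interval L r l l' = {x \<in> L. (l, x) \<in> r \<and> (x, l') \<in> r}"

definition open_interval :: "'a set \<Rightarrow> 'a rel \<Rightarrow> 'a \<Rightarrow> 'a \<Rightarrow> 'a set" where
  "open_interval L r l l' = {x \<in> L. (l, x) \<in> r \<and> x \<noteq> l \<and> (x, l') \<in> r \<and> x \<noteq> l'}"

definition grain_line ::
  "'a set \<Rightarrow> ('a \<Rightarrow> 'a \<Rightarrow> bool) \<Rightarrow> 'a \<Rightarrow> 'a \<Rightarrow> 'a set \<Rightarrow> 'a rel \<Rightarrow> nat \<Rightarrow> (nat \<Rightarrow> 'a list) \<Rightarrow> bool" where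
  "grain_line V E a b L r M P \<longleftrightarrow>
     a \<noteq> b \<and> L \<subseteq> V \<and> countable L \<and>
     r \<subseteq> L \<times> L \<and> linear_order_on L r \<and>
     a \<in> L \<and> b \<in> L \<and> (\<forall>x\<in>L. (a, x) \<in> r \<and> (x, b) \<in> r) \<and>
     (\<forall>n\<ge>M. ab_path V E a b (P n)) \<and>
     (\<forall>m\<ge>M. \<forall>n\<ge>M. m \<noteq> n \<longrightarrow> path_edges (P m) \<inter> path_edges (P n) = {}) \<and>
     \<comment> \<open>GL1\<close>
     L = {v. \<exists>m\<ge>M. {n. n \<ge> M \<and> v \<in> set (P n)} = {m..}} \<and>
     \<comment> \<open>GL2\<close>
     (\<forall>n\<ge>M. \<forall>v\<in>set (P n). v \<notin> L \<longrightarrow> (\<forall>m\<ge>M. m \<noteq> n \<longrightarrow> v \<notin> set (P m))) \<and>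
     \<comment> \<open>GL3\<close>
     (\<forall>n\<ge>M. same_order_on (L_below L M P n) r (P n))"

definition grains :: "'a set \<Rightarrow> 'a rel \<Rightarrow> (nat \<Rightarrow> 'a list) \<Rightarrow> nat \<Rightarrow> 'a set \<Rightarrow> bool" where
  "grains L r P n U \<longleftrightarrow>
     (\<forall>m\<ge>n. set (P m) \<inter> U = L \<inter> U \<and> same_order_on (L \<inter> U) r (P m))"

definition wildly_presented :: "'a set \<Rightarrow> 'a rel \<Rightarrow> nat \<Rightarrow> (nat \<Rightarrow> 'a list) \<Rightarrow> bool" where
  "wildly_presented L r M P \<longleftrightarrow>
     (\<forall>n\<ge>M. \<forall>l\<in>L_below L M P n. \<forall>l'\<in>L_below L M P n. (l, l') \<in> r \<and> l \<noteq> l' \<longrightarrow>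
        (\<exists>v\<in>set (subpath (P n) l l'). v \<in> open_interval L r l l'))"

end

theory Submission
  imports Defs
begin

lemma index_in: assumes "u \<in> set P" shows "index P u < length P \<and> P ! index P u = u"
proof -
  obtain k where "k < length P" "P ! k = u" using assms by (auto simp: in_set_conv_nth)
  then have "\<exists>k. k < length P \<and> P ! k = u" by blast
  from LeastI_ex[OF this] show ?thesis unfolding index_def .
qed

lemma index_nth: assumes "distinct P" "k < length P" shows "index P (P ! k) = k"
  unfolding index_def
proof (rule Least_equality)
  show "k < length P \<and> P ! k = P ! k" using assms by simp
  fix y assume "y < length P \<and> P ! y = P ! k"
  then have "y = k" using assms nth_eq_iff_index_eq by blast
  then show "k \<le> y" by simp
qed

lemma index_eq_iff: assumes "distinct P" "u \<in> set P" "k < length P" shows "index P u = k \<longleftrightarrow> P ! k = u"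
  using index_in[OF assms(2)] index_nth[OF assms(1,3)] by metis

locale seg =
  fixes P :: "'a list" and i j :: nat and Q :: "'a list"
  assumes dist: "distinct P" and ij: "i \<le> j" and jl: "j < length P"
    and Qdef: "Q = drop i (take (Suc j) P)"
begin

lemma lenQ: "length Q = Suc j - i" using ij jl Qdef by simp

lemma nthQ: "k < length Q \<Longrightarrow> Q ! k = P ! (i + k)"
  using ij jl Qdef lenQ by (simp add: nth_drop nth_take)

lemma distQ: "distinct Q" using dist Qdef by simp

lemma setQ: "u \<in> set Q \<longleftrightarrow> u \<in> set P \<and> i \<le> index P u \<and> index P u \<le> j"
proof
  assume "u \<in> set Q"
  then obtain k where k: "k < length Q" "Q ! k = u" by (auto simp: in_set_conv_nth)
  then have u: "u = P ! (i+k)" using nthQ by simp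
  have "i + k < length P" using k lenQ jl by simp
  then show "u \<in> set P \<and> i \<le> index P u \<and> index P u \<le> j"
    using u index_nth[OF dist] k lenQ by auto
next
  assume a: "u \<in> set P \<and> i \<le> index P u \<and> index P u \<le> j"
  define k where "k = index P u - i"
  have "k < length Q" using a lenQ k_def ij by linarith
  moreover have "Q ! k = u" using nthQ[OF \<open>k < length Q\<close>] a k_def index_in[of u P] by auto
  ultimately show "u \<in> set Q" using nth_mem by metis
qed

lemma indexQ: "u \<in> set Q \<Longrightarrow> index Q u = index P u - i"
proof -
  assume u: "u \<in> set Q"
  then have a: "u \<in> set P" "i \<le> index P u" "index P u \<le> j" using setQ by auto
  define k where "k = index P u - i"
  have k: "k < length Q" using a lenQ k_def by simp
  have "Q ! k = u" using nthQ[OF k] a k_def index_in[of u P] by auto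
  then show ?thesis using index_nth[OF distQ k] k_def by simp
qed

lemma path_leQ: "path_le Q u w \<longleftrightarrow> u \<in> set Q \<and> w \<in> set Q \<and> path_le P u w"
  unfolding path_le_def using setQ indexQ by auto

lemma hdQ: "hd Q = P ! i"
proof -
  have "0 < length Q" using lenQ ij by simp
  then show ?thesis using nthQ[of 0] by (simp add: hd_conv_nth)
qed

lemma lastQ: "last Q = P ! j"
proof -
  have "Q \<noteq> []" using lenQ ij by auto
  then show ?thesis using nthQ lenQ ij last_conv_nth by (metis Suc_diff_le diff_Suc_1 le_add_diff_inverse lessI)
qed

lemma pathQ: "is_path V E P \<Longrightarrow> is_path V E Q"
  unfolding is_path_def
proof (intro conjI allI impI)
  assume p: "P \<noteq> [] \<and> distinct P \<and> set P \<subseteq> V \<and> (\<forall>i. Suc i < length P \<longrightarrow> E (P ! i) (P ! Suc i))"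
  show "Q \<noteq> []" using lenQ ij by auto
  show "distinct Q" using distQ .
  show "set Q \<subseteq> V" using p setQ by auto
  fix k assume "Suc k < length Q"
  then show "E (Q ! k) (Q ! Suc k)" using p nthQ lenQ jl by auto
qed

lemma edgesQ: "path_edges Q \<subseteq> path_edges P"
proof
  fix e assume "e \<in> path_edges Q"
  then obtain k where "Suc k < length Q" "e = {Q ! k, Q ! Suc k}" unfolding path_edges_def by auto
  then have "Suc (i+k) < length P" "e = {P ! (i+k), P ! Suc (i+k)}" using nthQ lenQ jl by auto
  then show "e \<in> path_edges P" unfolding path_edges_def by blast
qed

lemma subpathQ: assumes "u \<in> set Q" "w \<in> set Q" shows "subpath Q u w = subpath P u w"
proof -
  have a: "i \<le> index P u" "index P u \<le> j" "i \<le> index P w" "index P w \<le> j" using assms setQ by auto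
  have iu: "index Q u = index P u - i" "index Q w = index P w - i" using assms indexQ by auto
  have d: "drop (a - i) (take (Suc b - i) Q) = drop a (take (Suc b) P)" if "i \<le> a" "a \<le> j" "i \<le> b" "b \<le> j" for a b
  proof -
    have "take (Suc b - i) Q = drop i (take (Suc b) P)"
      using Qdef that by (simp add: take_drop min_def)
    then show ?thesis using that by simp
  qed
  show ?thesis unfolding subpath_def iu using a d[of "index P u" "index P w"] d[of "index P w" "index P u"]
    by (auto simp: Suc_diff_le)
qed

end

theorem lemma5p6:
  fixes V :: "'a set" and E :: "'a \<Rightarrow> 'a \<Rightarrow> bool"
    and x y l1 l2 :: 'a and L :: "'a set" and r :: "'a rel"
    and P :: "nat \<Rightarrow> 'a list" and N :: nat
  assumes "simple_graph V E"
    and "grain_line V E x y L r 0 P"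
    and "l1 \<in> L" and "l2 \<in> L" and "(l1, l2) \<in> r" and "l1 \<noteq> l2"
    and "grains L r P N {l1, l2}"
  shows "grain_line V E l1 l2 (closed_interval L r l1 l2)
           (r \<inter> (closed_interval L r l1 l2 \<times> closed_interval L r l1 l2))
           N (\<lambda>n. subpath (P n) l1 l2)
       \<and> (wildly_presented L r 0 P \<longrightarrow>
           wildly_presented (closed_interval L r l1 l2)
             (r \<inter> (closed_interval L r l1 l2 \<times> closed_interval L r l1 l2))
             N (\<lambda>n. subpath (P n) l1 l2))"
proof -
  define L' where "L' = closed_interval L r l1 l2"
  define r' where "r' = r \<inter> (L' \<times> L')"
  define Q where "Q = (\<lambda>n. subpath (P n) l1 l2)"
  note G = assms(2)[unfolded grain_line_def]
  have LV: "L \<subseteq> V" and cL: "countable L" and rL: "r \<subseteq> L \<times> L" and lin: "linear_order_on L r"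
    using G by auto
  have paths: "\<And>n. ab_path V E x y (P n)" using G by auto
  have disj: "\<And>m n. m \<noteq> n \<Longrightarrow> path_edges (P m) \<inter> path_edges (P n) = {}" using G by auto
  have GL1: "L = {v. \<exists>m\<ge>0. {n. n \<ge> 0 \<and> v \<in> set (P n)} = {m..}}" using G by blast
  have GL2: "\<And>n v m. v \<in> set (P n) \<Longrightarrow> v \<notin> L \<Longrightarrow> m \<noteq> n \<Longrightarrow> v \<notin> set (P m)" using G by blast
  have GL3: "\<And>n. same_order_on (L_below L 0 P n) r (P n)" using G by blast
  have refl: "\<And>u. u \<in> L \<Longrightarrow> (u,u) \<in> r" and tr: "trans r" and anti: "antisym r"
    and tot: "total_on L r"
    using lin unfolding order_on_defs refl_on_def by auto
  have gr: "\<And>m. m \<ge> N \<Longrightarrow> set (P m) \<inter> {l1,l2} = L \<inter> {l1,l2} \<and> same_order_on (L \<inter> {l1,l2}) r (P m)"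
    using assms(7) unfolding grains_def by blast
  have n21: "(l2, l1) \<notin> r" using anti assms(5,6) unfolding antisym_def by blast
  have dist: "\<And>n. distinct (P n)" using paths unfolding ab_path_def is_path_def by blast
  have inl: "\<And>m. m \<ge> N \<Longrightarrow> l1 \<in> set (P m) \<and> l2 \<in> set (P m)" using gr assms(3,4) by blast
  have ilt: "index (P m) l1 < index (P m) l2" if "m \<ge> N" for m
  proof -
    have "\<not> path_le (P m) l2 l1" using gr[OF that] n21 assms(3,4) unfolding same_order_on_def by blast
    then show ?thesis using inl[OF that] unfolding path_le_def by auto
  qed
  have sg: "seg (P m) (index (P m) l1) (index (P m) l2) (Q m)" if "m \<ge> N" for m
    unfolding seg_def Q_def subpath_def using dist ilt[OF that] index_in[of l2 "P m"] inl[OF that] by auto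
  have QP: "\<And>m v. m \<ge> N \<Longrightarrow> v \<in> set (Q m) \<Longrightarrow> v \<in> set (P m)" using seg.setQ[OF sg] by blast
  have "\<forall>v\<in>L. \<exists>s. {n. v \<in> set (P n)} = {s..}" using GL1 by auto
  then obtain st where st: "\<And>v. v \<in> L \<Longrightarrow> {n. v \<in> set (P n)} = {st v..}" by metis
  have stI: "\<And>v n. v \<in> L \<Longrightarrow> v \<in> set (P n) \<longleftrightarrow> st v \<le> n"
    using st by blast
  have BI: "\<And>u k n. u \<in> L \<Longrightarrow> u \<in> set (P k) \<Longrightarrow> k < n \<Longrightarrow> u \<in> L_below L 0 P n"
    unfolding L_below_def by auto
  have key: "v \<in> set (Q n) \<longleftrightarrow> v \<in> L'" if v: "v \<in> L" and n: "st v < n" "N < n" for v n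
  proof -
    have vP: "v \<in> set (P n)" using stI[OF v] n by simp
    have B: "v \<in> L_below L 0 P n" "l1 \<in> L_below L 0 P n" "l2 \<in> L_below L 0 P n"
      using BI[OF v, of "st v" n] stI[OF v] n BI[OF assms(3), of N n] BI[OF assms(4), of N n] inl[of N] by auto
    have o: "\<And>a b. a \<in> L_below L 0 P n \<Longrightarrow> b \<in> L_below L 0 P n \<Longrightarrow> (a,b) \<in> r \<longleftrightarrow> path_le (P n) a b"
      using GL3[of n] unfolding same_order_on_def by blast
    have "v \<in> set (Q n) \<longleftrightarrow> path_le (P n) l1 v \<and> path_le (P n) v l2"
      using seg.setQ[OF sg[of n]] n vP inl[of n] unfolding path_le_def by auto
    also have "\<dots> \<longleftrightarrow> (l1, v) \<in> r \<and> (v, l2) \<in> r" using o B by blast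
    also have "\<dots> \<longleftrightarrow> v \<in> L'" unfolding L'_def closed_interval_def using v by auto
    finally show ?thesis .
  qed
  have L'L: "L' \<subseteq> L" unfolding L'_def closed_interval_def by auto
  have fs: "\<exists>m\<ge>N. \<forall>n. (n \<ge> N \<and> v \<in> set (Q n)) \<longleftrightarrow> n \<ge> m" if v: "v \<in> L'" for v
  proof -
    have vL: "v \<in> L" using v L'L by auto
    define K where "K = max (st v) N"
    have hi: "\<And>n. n > K \<Longrightarrow> v \<in> set (Q n)" using key[OF vL] v K_def by auto
    have lo: "\<And>n. n \<ge> N \<Longrightarrow> v \<in> set (Q n) \<Longrightarrow> n \<ge> K" using QP stI[OF vL] K_def by fastforce
    show ?thesis
    proof (cases "v \<in> set (Q K)")
      case True
      have "\<forall>n. (n \<ge> N \<and> v \<in> set (Q n)) \<longleftrightarrow> n \<ge> K"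
      proof (intro allI iffI)
        fix n assume "N \<le> n \<and> v \<in> set (Q n)" then show "K \<le> n" using lo by blast
      next
        fix n assume "K \<le> n"
        then have "n = K \<or> n > K" by linarith
        then show "N \<le> n \<and> v \<in> set (Q n)" using True hi \<open>K \<le> n\<close> K_def by auto
      qed
      moreover have "K \<ge> N" using K_def by simp
      ultimately show ?thesis by blast
    next
      case False
      have "\<forall>n. (n \<ge> N \<and> v \<in> set (Q n)) \<longleftrightarrow> n \<ge> Suc K"
      proof (intro allI iffI)
        fix n assume a: "N \<le> n \<and> v \<in> set (Q n)"
        then have "K \<le> n" using lo by blast
        moreover have "n \<noteq> K" using a False by auto
        ultimately show "Suc K \<le> n" by linarith
      next
        fix n assume "Suc K \<le> n"
        then have "n > K" by simp
        then show "N \<le> n \<and> v \<in> set (Q n)" using hi[of n] K_def by simp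
      qed
      moreover have "Suc K \<ge> N" using K_def by simp
      ultimately show ?thesis by blast
    qed
  qed
  have newGL1: "L' = {v. \<exists>m\<ge>N. {n. n \<ge> N \<and> v \<in> set (Q n)} = {m..}}"
  proof (intro equalityI subsetI)
    fix v assume "v \<in> L'"
    from fs[OF this] obtain m where "m \<ge> N" "\<forall>n. (n \<ge> N \<and> v \<in> set (Q n)) \<longleftrightarrow> n \<ge> m" by blast
    then show "v \<in> {v. \<exists>m\<ge>N. {n. n \<ge> N \<and> v \<in> set (Q n)} = {m..}}" by auto
  next
    fix v assume "v \<in> {v. \<exists>m\<ge>N. {n. n \<ge> N \<and> v \<in> set (Q n)} = {m..}}"
    then obtain m where m: "m \<ge> N" "{n. n \<ge> N \<and> v \<in> set (Q n)} = {m..}" by blast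
    have q: "\<And>n. n \<ge> m \<Longrightarrow> v \<in> set (Q n)" using m by blast
    have "v \<in> set (P m)" "v \<in> set (P (Suc m))" using q QP m(1) by auto
    then have vL: "v \<in> L" using GL2[of v m "Suc m"] by auto
    define n where "n = Suc (max (max m (st v)) N)"
    have "v \<in> set (Q n)" using q n_def by simp
    then show "v \<in> L'" using key[OF vL, of n] n_def by simp
  qed
  have newGL2: "v \<notin> set (Q m)" if "n \<ge> N" "v \<in> set (Q n)" "v \<notin> L'" "m \<ge> N" "m \<noteq> n" for n v m
  proof
    assume vm: "v \<in> set (Q m)"
    show False
    proof (cases "v \<in> L")
      case False
      then show False using GL2[of v n m] QP[of n v] QP[of m v] that vm by blast
    next
      case True
      have "n \<le> max (st v) N" "m \<le> max (st v) N" using key[OF True] that vm by (meson leI max.strict_boundedE)+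
      moreover have "n \<ge> st v" "m \<ge> st v" using stI[OF True] QP that vm by auto
      ultimately show False using that by linarith
    qed
  qed
  have LB: "u \<in> L' \<and> u \<in> set (Q n) \<and> u \<in> L_below L 0 P n" if "n \<ge> N" "u \<in> L_below L' N Q n" for u n
  proof -
    have "u \<in> L' \<and> (\<exists>k\<in>{N..<n}. u \<in> set (Q k))" using that(2) unfolding L_below_def by simp
    then obtain k where k: "u \<in> L'" "N \<le> k" "k < n" "u \<in> set (Q k)" by auto
    from fs[OF k(1)] obtain m where m: "m \<ge> N" "\<forall>n. (n \<ge> N \<and> u \<in> set (Q n)) \<longleftrightarrow> n \<ge> m" by blast
    have mk: "m \<le> k" using k m(2)[rule_format, of k] by simp
    have "u \<in> set (Q n)" using k mk m(2)[rule_format, of n] by simp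
    moreover have "u \<in> L" using k(1) L'L by blast
    moreover have "u \<in> set (P k)" using QP[OF k(2) k(4)] .
    ultimately show ?thesis using BI[of u k n] k(1,3) by blast
  qed
  have newGL3: "same_order_on (L_below L' N Q n) r' (Q n)" if n: "n \<ge> N" for n
    unfolding same_order_on_def
  proof (intro ballI)
    fix u w assume u: "u \<in> L_below L' N Q n" and w: "w \<in> L_below L' N Q n"
    note lu = LB[OF n u] and lw = LB[OF n w]
    have "(u, w) \<in> r' \<longleftrightarrow> (u, w) \<in> r" using lu lw r'_def by auto
    also have "\<dots> \<longleftrightarrow> path_le (P n) u w" using GL3[of n] lu lw unfolding same_order_on_def by blast
    also have "\<dots> \<longleftrightarrow> path_le (Q n) u w" using seg.path_leQ[OF sg[OF n]] lu lw by blast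
    finally show "(u, w) \<in> r' \<longleftrightarrow> path_le (Q n) u w" .
  qed
  have linear': "linear_order_on L' r'"
    unfolding order_on_defs
  proof (intro conjI)
    show "r' \<subseteq> L' \<times> L'" unfolding r'_def by blast
    show "refl_on L' r'" unfolding refl_on_def r'_def using refl L'L by blast
    show "trans r'" using tr unfolding trans_def r'_def by blast
    show "antisym r'" using anti unfolding antisym_def r'_def by blast
    show "total_on L' r'" using tot L'L unfolding total_on_def r'_def by blast
  qed
  have l12: "l1 \<in> L'" "l2 \<in> L'" using refl assms(3,4,5) unfolding L'_def closed_interval_def by auto
  have between: "\<forall>v\<in>L'. (l1, v) \<in> r' \<and> (v, l2) \<in> r'" using l12 unfolding r'_def L'_def closed_interval_def by auto
  have newpaths: "ab_path V E l1 l2 (Q n)" if n: "n \<ge> N" for n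
  proof -
    have "is_path V E (P n)" using paths unfolding ab_path_def by blast
    then show ?thesis unfolding ab_path_def using seg.pathQ[OF sg[OF n]] seg.hdQ[OF sg[OF n]] seg.lastQ[OF sg[OF n]]
      index_in[of l1 "P n"] index_in[of l2 "P n"] inl[OF n] by auto
  qed
  have newdisj: "path_edges (Q m) \<inter> path_edges (Q n) = {}" if "m \<ge> N" "n \<ge> N" "m \<noteq> n" for m n
    using seg.edgesQ[OF sg[OF that(1)]] seg.edgesQ[OF sg[OF that(2)]] disj[OF that(3)] by blast
  have part1: "grain_line V E l1 l2 L' r' N Q"
    unfolding grain_line_def
  proof (intro conjI)
    show "l1 \<noteq> l2" by fact
    show "L' \<subseteq> V" using L'L LV by blast
    show "countable L'" using countable_subset[OF L'L cL] .
    show "r' \<subseteq> L' \<times> L'" unfolding r'_def by blast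
    show "linear_order_on L' r'" by fact
    show "l1 \<in> L'" "l2 \<in> L'" by fact+
    show "\<forall>v\<in>L'. (l1, v) \<in> r' \<and> (v, l2) \<in> r'" by fact
    show "\<forall>n\<ge>N. ab_path V E l1 l2 (Q n)" using newpaths by blast
    show "\<forall>m\<ge>N. \<forall>n\<ge>N. m \<noteq> n \<longrightarrow> path_edges (Q m) \<inter> path_edges (Q n) = {}" using newdisj by blast
    show "L' = {v. \<exists>m\<ge>N. {n. n \<ge> N \<and> v \<in> set (Q n)} = {m..}}" by fact
    show "\<forall>n\<ge>N. \<forall>v\<in>set (Q n). v \<notin> L' \<longrightarrow> (\<forall>m\<ge>N. m \<noteq> n \<longrightarrow> v \<notin> set (Q m))"
      using newGL2 by blast
    show "\<forall>n\<ge>N. same_order_on (L_below L' N Q n) r' (Q n)" using newGL3 by blast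
  qed
  have part2: "wildly_presented L' r' N Q" if wild: "wildly_presented L r 0 P"
    unfolding wildly_presented_def
  proof (intro allI impI ballI)
    fix n l l' assume n: "n \<ge> N" and l: "l \<in> L_below L' N Q n" and l': "l' \<in> L_below L' N Q n"
      and ll: "(l, l') \<in> r' \<and> l \<noteq> l'"
    note a = LB[OF n l] and b = LB[OF n l']
    have "(l, l') \<in> r" using ll r'_def by auto
    then obtain v where v: "v \<in> set (subpath (P n) l l')" "v \<in> open_interval L r l l'"
      using wild a b ll unfolding wildly_presented_def by blast
    have "subpath (Q n) l l' = subpath (P n) l l'" using seg.subpathQ[OF sg[OF n]] a b by blast
    moreover have "v \<in> open_interval L' r' l l'"
    proof -
      have "(l1, l) \<in> r" "(l', l2) \<in> r" using a b unfolding L'_def closed_interval_def by auto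
      then have "v \<in> L'" using v(2) tr unfolding L'_def closed_interval_def open_interval_def trans_def by blast
      then show ?thesis using v(2) a b unfolding r'_def open_interval_def by auto
    qed
    ultimately show "\<exists>v\<in>set (subpath (Q n) l l'). v \<in> open_interval L' r' l l'" using v(1) by auto
  qed
  show ?thesis using part1 part2 unfolding L'_def r'_def Q_def by blast
qed

end
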